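(* Let $m \ge \ell \ge k \ge 1$ and let ${\mathcal{C}} = {\mathcal{C}}[\ell+m,\ell,k]$ be constructed as in the context, for any choice of design parameters $h \in \{0,\dots,k-1\}$ at every level of the recursion. Then every element of ${\mathcal{C}}$ is an $\ell$-dimensional subspace of $W$, and for all $U,V\in{\mathcal{C}}$ with $U\neq V$ we have $\dim(U\cap V)\le k-1$. Consequently $d(U,V)\ge 2(\ell-k+1)$ for all distinct $U,V\in{\mathcal{C}}$.
   Context: Let $q$ be a prime power. Subspace distance: for subspaces $U,V$ of an $\mathbb{F}_q$-vector space, $d(U,V) = \dim U + \dim V - 2\dim(U\cap V)$. Kötter–Kschischang code ${\mathcal{K}}[n,\ell,k]$ (for $n-\ell \ge \ell \ge k \ge 1$): put $m=n-\ell$, $\mathbb{F}=\mathbb{F}_{q^m}$, fix $\mathbb{F}_q$-linearly independent $\alpha_1,\dots,\alpha_\ell \in \mathbb{F}$, let $\langle A\rangle$ be their $\mathbb{F}_q$-span and $W = \langle A\rangle \times \mathbb{F}$ (an $n$-dimensional $\mathbb{F}_q$-space, vectors written $(v_1,v_2)$). For a linearized polynomial $f(x)=\sum_{i=0}^{k-1} f_i x^{q^i}$ with $f_i\in\mathbb{F}$, let ${\mathcal{E}}(f)=\mathrm{span}_{\mathbb{F}_q}\{(\alpha_i,f(\alpha_i)) : 1\le i\le \ell\}$, and ${\mathcal{K}}[n,\ell,k]=\{{\mathcal{E}}(f)\}$. It is known that $|{\mathcal{K}}[n,\ell,k]| = q^{mk}$ and that distinct elements of ${\mathcal{K}}$ intersect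 in dimension at most $k-1$. Any $n$-dimensional $\mathbb{F}_q$-space is identified with such a $W$ via a fixed linear isomorphism. Recursive code ${\mathcal{C}}[\ell+m,\ell,k]$ (for $m\ge \ell \ge k$), in $W=\langle A\rangle\times\mathbb{F}$, $\mathbb{F}=\mathbb{F}_{q^m}$: choose a design parameter $h=h_{\ell+m}\in\{0,\dots,k-1\}$. If $m<2(\ell-h)$ or $\ell-h<k$, set ${\mathcal{C}}={\mathcal{K}}[\ell+m,\ell,k]$. Otherwise let ${\mathcal{C}}[m,\ell-h,k]=\{U_1,\dots,U_N\}$ be the recursively constructed code inside $\mathbb{F}$ (viewed as an $m$-dimensional $\mathbb{F}_q$-space), $N$ its size, and fix a basis $e^\sigma_1,\dots,e^\sigma_{\ell-h}$ of each $U_\sigma$. If $h>0$, let $t=\min\{\lfloor \ell/h\rfloor, N\}$ and $S_\sigma=\{(\alpha_j,0) : (\sigma-1)h+1\le j\le \sigma h\}$; if $h=0$, let $t=N$ and $S_\sigma=\emptyset$. Let $T_\sigma=\{(0,e^\sigma_j): 1\le j\le \ell-h\}$, $V_\sigma=\mathrm{span}(S_\sigma\cup T_\sigma)$ for $1\le\sigma\le t$, ${\mathcal{B}}=\{V_\sigma\}$, and ${\mathcal{C}}={\mathcal{K}}[\ell+m,\ell,k]\cup{\mathcal{B}}$. *)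

theory Defs
  imports Main "HOL.Vector_Spaces" "HOL-Library.Function_Algebras" "HOL-Library.Product_Plus" "HOL-Algebra.Ring"
begin

text \<open>Vectors over F_q are functions nat => 'a; the standard n-dimensional space is
  the set of vectors supported on {0..<n}.\<close>

definition Vsp :: "nat \<Rightarrow> (nat \<Rightarrow> 'a::zero) set" where
  "Vsp n = {v. \<forall>i\<ge>n. v i = 0}"

definition fscale :: "'a::times \<Rightarrow> (nat \<Rightarrow> 'a) \<Rightarrow> nat \<Rightarrow> 'a" where
  "fscale c v = (\<lambda>i. c * v i)"

definition pscale :: "'a::times \<Rightarrow> (nat \<Rightarrow> 'a) \<times> (nat \<Rightarrow> 'a) \<Rightarrow> (nat \<Rightarrow> 'a) \<times> (nat \<Rightarrow> 'a)" where
  "pscale c p = (fscale c (fst p), fscale c (snd p))"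

abbreviation fspan :: "(nat \<Rightarrow> 'a::field) set \<Rightarrow> (nat \<Rightarrow> 'a) set" where
  "fspan \<equiv> module.span fscale"

abbreviation pspan :: "((nat \<Rightarrow> 'a::field) \<times> (nat \<Rightarrow> 'a)) set \<Rightarrow> ((nat \<Rightarrow> 'a) \<times> (nat \<Rightarrow> 'a)) set" where
  "pspan \<equiv> module.span pscale"

abbreviation fdim :: "(nat \<Rightarrow> 'a::field) set \<Rightarrow> nat" where
  "fdim \<equiv> vector_space.dim fscale"

abbreviation fsubspace :: "(nat \<Rightarrow> 'a::field) set \<Rightarrow> bool" where
  "fsubspace \<equiv> module.subspace fscale"

abbreviation findependent :: "(nat \<Rightarrow> 'a::field) set \<Rightarrow> bool" where
  "findependent S \<equiv> \<not> module.dependent fscale S"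

definition subdist :: "(nat \<Rightarrow> 'a::field) set \<Rightarrow> (nat \<Rightarrow> 'a) set \<Rightarrow> int" where
  "subdist U V = int (fdim U) + int (fdim V) - 2 * int (fdim (U \<inter> V))"

text \<open>Linearized polynomial f(x) = sum_{i<k} f_i x^(q^i), evaluated in the field R (a model of F_{q^m}).\<close>
definition linpoly :: "(nat \<Rightarrow> 'a::{field,finite}) ring \<Rightarrow> nat \<Rightarrow> (nat \<Rightarrow> nat \<Rightarrow> 'a) \<Rightarrow> (nat \<Rightarrow> 'a) \<Rightarrow> (nat \<Rightarrow> 'a)" where
  "linpoly R k f x = (\<Sum>i<k. f i \<otimes>\<^bsub>R\<^esub> (x [^]\<^bsub>R\<^esub> (card (UNIV :: 'a set) ^ i)))"

definition Esp :: "(nat \<Rightarrow> 'a::{field,finite}) ring \<Rightarrow> (nat \<Rightarrow> nat \<Rightarrow> 'a) \<Rightarrow> nat \<Rightarrow> nat \<Rightarrow> (nat \<Rightarrow> nat \<Rightarrow> 'a)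
     \<Rightarrow> ((nat \<Rightarrow> 'a) \<times> (nat \<Rightarrow> 'a)) set" where
  "Esp R \<alpha> l k f = pspan ((\<lambda>i. (\<alpha> i, linpoly R k f (\<alpha> i))) ` {1..l})"

text \<open>Koetter-Kschischang code, transported to the standard space via phi.\<close>
definition KKcode :: "(nat \<Rightarrow> 'a::{field,finite}) ring \<Rightarrow> (nat \<Rightarrow> nat \<Rightarrow> 'a) \<Rightarrow> nat \<Rightarrow> nat
     \<Rightarrow> ((nat \<Rightarrow> 'a) \<times> (nat \<Rightarrow> 'a) \<Rightarrow> (nat \<Rightarrow> 'a)) \<Rightarrow> (nat \<Rightarrow> 'a) set set" where
  "KKcode R \<alpha> l k \<phi> = {\<phi> ` Esp R \<alpha> l k f | f. \<forall>i<k. f i \<in> carrier R}"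

text \<open>Admissible data for the ambient W = <A> x F with F = F_{q^m} (n = l + m):
  R is a field structure on the m-dimensional space Vsp m extending the F_q-scalars
  (hence a model of F_{q^m}), alpha_1..alpha_l are F_q-independent elements of F,
  and phi is an F_q-linear isomorphism from W onto the standard space Vsp n.\<close>
definition kk_setup :: "nat \<Rightarrow> nat \<Rightarrow> nat \<Rightarrow> (nat \<Rightarrow> 'a::{field,finite}) ring \<Rightarrow> (nat \<Rightarrow> nat \<Rightarrow> 'a)
     \<Rightarrow> ((nat \<Rightarrow> 'a) \<times> (nat \<Rightarrow> 'a) \<Rightarrow> (nat \<Rightarrow> 'a)) \<Rightarrow> bool" where
  "kk_setup m n l R \<alpha> \<phi> \<longleftrightarrow>
     field R \<and> carrier R = Vsp m \<and> add R = (+) \<and> zero R = 0 \<and>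
     (\<forall>c x y. x \<in> carrier R \<longrightarrow> y \<in> carrier R \<longrightarrow> x \<otimes>\<^bsub>R\<^esub> fscale c y = fscale c (x \<otimes>\<^bsub>R\<^esub> y)) \<and>
     \<alpha> ` {1..l} \<subseteq> Vsp m \<and> inj_on \<alpha> {1..l} \<and> findependent (\<alpha> ` {1..l}) \<and>
     Vector_Spaces.linear pscale fscale \<phi> \<and>
     bij_betw \<phi> {(a, b). a \<in> fspan (\<alpha> ` {1..l}) \<and> b \<in> Vsp m} (Vsp n)"

text \<open>The generating set S_sigma \<union> T_sigma of V_sigma in A x F (l here is the inner dimension l - h).\<close>
definition Vblock :: "(nat \<Rightarrow> nat \<Rightarrow> 'a::zero) \<Rightarrow> nat \<Rightarrow> nat \<Rightarrow> (nat \<Rightarrow> nat \<Rightarrow> nat \<Rightarrow> 'a) \<Rightarrow> nat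
     \<Rightarrow> ((nat \<Rightarrow> 'a) \<times> (nat \<Rightarrow> 'a)) set" where
  "Vblock \<alpha> h l e \<sigma> =
     (\<lambda>j. (\<alpha> j, 0)) ` {(\<sigma> - 1) * h + 1 .. \<sigma> * h} \<union> (\<lambda>j. (0, e \<sigma> j)) ` {1..l}"

text \<open>Ccode n l k C: C is a possible output of the recursive construction C[n,l,k]
  (n = l + m), for some choice of all design parameters h and of all auxiliary data
  (field models, alphas, identifications, enumerations, bases) at every level.\<close>
inductive Ccode :: "nat \<Rightarrow> nat \<Rightarrow> nat \<Rightarrow> (nat \<Rightarrow> 'a::{field,finite}) set set \<Rightarrow> bool" where
  base: "\<lbrakk> 1 \<le> k; k \<le> l; l \<le> m; h < k; m < 2 * (l - h) \<or> l - h < k;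
          kk_setup m (l + m) l R \<alpha> \<phi> \<rbrakk>
         \<Longrightarrow> Ccode (l + m) l k (KKcode R \<alpha> l k \<phi>)"
| recur: "\<lbrakk> 1 \<le> k; k \<le> l; l \<le> m; h < k; \<not> (m < 2 * (l - h) \<or> l - h < k);
          kk_setup m (l + m) l R \<alpha> \<phi>;
          Ccode m (l - h) k D;
          bij_betw U {1..card D} D;
          t = (if h > 0 then min (l div h) (card D) else card D);
          \<forall>\<sigma>\<in>{1..t}. inj_on (e \<sigma>) {1..l - h} \<and> findependent (e \<sigma> ` {1..l - h})
                      \<and> fspan (e \<sigma> ` {1..l - h}) = U \<sigma> \<rbrakk>
         \<Longrightarrow> Ccode (l + m) l k
               (KKcode R \<alpha> l k \<phi> \<union> {\<phi> ` pspan (Vblock \<alpha> h (l - h) e \<sigma>) | \<sigma>. \<sigma> \<in> {1..t}})"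

end

theory Submission
  imports Defs "HOL-Algebra.Multiplicative_Group" "HOL-Algebra.Sylow" "HOL-Computational_Algebra.Primes"
begin


lemma vs_f: "vector_space (fscale :: 'a::field \<Rightarrow> (nat \<Rightarrow> 'a) \<Rightarrow> _)"
  by unfold_locales (auto simp: fscale_def algebra_simps fun_eq_iff)

lemma vs_p: "vector_space (pscale :: 'a::field \<Rightarrow> (nat \<Rightarrow> 'a) \<times> (nat \<Rightarrow> 'a) \<Rightarrow> _)"
  by unfold_locales (auto simp: pscale_def fscale_def algebra_simps fun_eq_iff)

interpretation V: vector_space "fscale :: 'a::field \<Rightarrow> (nat \<Rightarrow> 'a) \<Rightarrow> _" by (rule vs_f)
interpretation P: vector_space "pscale :: 'a::field \<Rightarrow> (nat \<Rightarrow> 'a) \<times> (nat \<Rightarrow> 'a) \<Rightarrow> _" by (rule vs_p)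
interpretation VP: vector_space_pair "pscale :: 'a::field \<Rightarrow> (nat \<Rightarrow> 'a) \<times> (nat \<Rightarrow> 'a) \<Rightarrow> _" fscale ..
interpretation PV: vector_space_pair fscale "pscale :: 'a::field \<Rightarrow> (nat \<Rightarrow> 'a) \<times> (nat \<Rightarrow> 'a) \<Rightarrow> _" ..

lemma lin_fst: "Vector_Spaces.linear pscale fscale (fst :: (nat \<Rightarrow> 'a::field) \<times> _ \<Rightarrow> _)"
  by (rule Vector_Spaces.linear_iff[THEN iffD2]) (auto simp: pscale_def vs_f vs_p)
lemma lin_snd: "Vector_Spaces.linear pscale fscale (snd :: (nat \<Rightarrow> 'a::field) \<times> _ \<Rightarrow> _)"
  by (rule Vector_Spaces.linear_iff[THEN iffD2]) (auto simp: pscale_def vs_f vs_p)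



lemma ff_power_card: "(x::'a::{field,finite}) ^ card (UNIV :: 'a set) = x"
proof (cases "x = 0")
  case False
  have "x * (\<Prod>y\<in>UNIV-{0}. x * y) = x * x ^ (card (UNIV :: 'a set) - 1) * \<Prod>(UNIV-{0})"
    by (simp add: prod.distrib mult_ac)
  also have "x * x ^ (card (UNIV :: 'a set) - 1) = x ^ Suc (card (UNIV :: 'a set) - 1)"
    by (subst power_Suc) auto
  also have "Suc (card (UNIV :: 'a set) - 1) = card (UNIV :: 'a set)"
    using finite_UNIV_card_ge_0[where ?'a = 'a] by simp
  also have "(\<Prod>y\<in>UNIV-{0}. x * y) = (\<Prod>y\<in>UNIV-{0}. y)"
    by (rule prod.reindex_bij_witness[of _ "\<lambda>y. y / x" "\<lambda>y. x * y"]) (use False in auto)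
  finally show ?thesis
    by simp
qed (use finite_UNIV_card_ge_0[where ?'a = 'a] in auto)

lemma ff_power_card_pow: "(x::'a::{field,finite}) ^ (card (UNIV :: 'a set) ^ n) = x"
  by (induction n) (simp_all add: ff_power_card power_mult)

lemma ff_char_prime: "prime CHAR('a::{field,finite})"
  using prime_CHAR_semidom[where ?'a = 'a] finite_imp_CHAR_pos[where ?'a='a] by auto

definition addgrp :: "'a::ab_group_add monoid" where
  "addgrp = \<lparr>carrier = UNIV, monoid.mult = (+), one = 0\<rparr>"

lemma addgrp_group: "group (addgrp :: 'a::ab_group_add monoid)"
  by (rule groupI) (auto simp: addgrp_def add.assoc intro: exI[of _ "- x" for x])

lemma addgrp_pow: "x [^]\<^bsub>(addgrp :: 'a::ring_1 monoid)\<lparr>carrier := H\<rparr>\<^esub> (n::nat) = of_nat n * x"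
  by (induction n) (simp_all add: addgrp_def algebra_simps)

lemma ff_prime_dvd_card:
  assumes r: "prime r" and dv: "r dvd card (UNIV :: 'a::{field,finite} set)"
  shows "r = CHAR('a)"
proof -
  obtain m where m: "card (UNIV :: 'a set) = r ^ 1 * m" using dv by auto
  have "order (addgrp :: 'a monoid) = r ^ 1 * m" using m by (simp add: order_def addgrp_def)
  hence "\<exists>H. subgroup H (addgrp :: 'a monoid) \<and> card H = r ^ 1"
    by (intro sylow_thm[OF r addgrp_group]) (auto simp: addgrp_def)
  then obtain H where H: "subgroup H (addgrp :: 'a monoid)" "card H = r ^ 1" by blast
  have "card H \<ge> 2" using H r prime_ge_2_nat by auto
  have "\<not> H \<subseteq> {0}"
  proof
    assume "H \<subseteq> {0}"
    hence "card H \<le> 1" using card_mono[of "{0}" H] by simp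
    thus False using \<open>card H \<ge> 2\<close> by simp
  qed
  then obtain x where x: "x \<in> H" "x \<noteq> 0" by blast
  interpret Hg: group "(addgrp :: 'a monoid)\<lparr>carrier := H\<rparr>"
    using subgroup.subgroup_is_group[OF H(1) addgrp_group] .
  have "x [^]\<^bsub>(addgrp :: 'a monoid)\<lparr>carrier := H\<rparr>\<^esub> order ((addgrp :: 'a monoid)\<lparr>carrier := H\<rparr>) = 0"
    using Hg.pow_order_eq_1[of x] x by (simp add: addgrp_def)
  hence "of_nat r * x = (0::'a)" using H by (simp add: addgrp_pow order_def)
  hence "of_nat r = (0::'a)" using x by simp
  hence "CHAR('a) dvd r" by (simp add: of_nat_eq_0_iff_char_dvd)
  thus ?thesis using r ff_char_prime[where 'a='a]
    by (metis primes_dvd_imp_eq)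
qed

lemma only_prime_factor_power:
  fixes n p :: nat
  assumes "n > 0" "\<And>r. prime r \<Longrightarrow> r dvd n \<Longrightarrow> r = p"
  shows "\<exists>e. n = p ^ e"
  using assms
proof (induction n rule: less_induct)
  case (less n)
  show ?case
  proof (cases "n = 1")
    case True thus ?thesis by (intro exI[of _ 0]) simp
  next
    case False
    then obtain r where r: "prime r" "r dvd n" using prime_factor_nat by blast
    hence rp: "r = p" using less by blast
    obtain n' where n': "n = p * n'" using r rp by auto
    have "n' < n" "n' > 0" using n' less(2) r(1) rp prime_gt_1_nat by auto
    have "\<And>r. prime r \<Longrightarrow> r dvd n' \<Longrightarrow> r = p"
      using less(3) n' by (simp add: dvd_mult)
    then obtain e where "n' = p ^ e"
      using less(1)[of n'] \<open>n' < n\<close> \<open>n' > 0\<close> by blast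
    thus ?thesis using n' by (intro exI[of _ "Suc e"]) simp
  qed
qed

lemma ff_card_char_power: "\<exists>e. card (UNIV :: 'a::{field,finite} set) = CHAR('a) ^ e"
  by (rule only_prime_factor_power) (auto intro: ff_prime_dvd_card simp: finite_UNIV_card_ge_0)


lemma Vsp_add: "(x::nat\<Rightarrow>'a::field) \<in> Vsp m \<Longrightarrow> y \<in> Vsp m \<Longrightarrow> x + y \<in> Vsp m"
  by (auto simp: Vsp_def)
lemma Vsp_zero: "(0::nat\<Rightarrow>'a::field) \<in> Vsp m" by (auto simp: Vsp_def)
lemma Vsp_scale: "(x::nat\<Rightarrow>'a::field) \<in> Vsp m \<Longrightarrow> fscale c x \<in> Vsp m"
  by (auto simp: Vsp_def fscale_def)
lemma Vsp_uminus: "(x::nat\<Rightarrow>'a::field) \<in> Vsp m \<Longrightarrow> - x \<in> Vsp m"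
  by (auto simp: Vsp_def)
lemma Vsp_diff: "(x::nat\<Rightarrow>'a::field) \<in> Vsp m \<Longrightarrow> y \<in> Vsp m \<Longrightarrow> x - y \<in> Vsp m"
  by (auto simp: Vsp_def)
lemma Vsp_sum: "(\<And>i. i \<in> A \<Longrightarrow> (f i::nat\<Rightarrow>'a::field) \<in> Vsp m) \<Longrightarrow> sum f A \<in> Vsp m"
  by (induction A rule: infinite_finite_induct) (auto intro: Vsp_add Vsp_zero)
lemma fscale_fscale: "fscale c (fscale d x) = fscale (c * d) (x::nat\<Rightarrow>'a::field)"
  by (simp add: fscale_def fun_eq_iff mult.assoc)
lemma fscale_one: "fscale 1 x = (x::nat\<Rightarrow>'a::field)" by (simp add: fscale_def)
lemma fscale_add_left: "fscale (c + d) (x::nat\<Rightarrow>'a::field) = fscale c x + fscale d x"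
  by (simp add: fscale_def fun_eq_iff algebra_simps)
lemma fscale_zero_left: "fscale 0 x = (0::nat\<Rightarrow>'a::field)"
  by (simp add: fscale_def fun_eq_iff)

declare plus_fun_apply[simp del] zero_fun_apply[simp del] times_fun_apply[simp del]
  one_fun_apply[simp del]

locale Rsetup = field R for R :: "(nat \<Rightarrow> 'a::{field,finite}) ring" (structure) + fixes m :: nat
  assumes carR: "carrier R = Vsp m" and addR: "add R = (+)" and zeroR: "zero R = 0"
    and compat: "\<And>c x y. x \<in> carrier R \<Longrightarrow> y \<in> carrier R \<Longrightarrow> x \<otimes>\<^bsub>R\<^esub> fscale c y = fscale c (x \<otimes>\<^bsub>R\<^esub> y)"
begin

lemma addR'[simp]: "x \<oplus> y = x + y" by (simp add: addR)
lemma zeroR'[simp]: "\<zero> = 0" by (simp add: zeroR)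
lemma scale_closed[intro,simp]: "x \<in> carrier R \<Longrightarrow> fscale c x \<in> carrier R"
  by (simp add: carR Vsp_scale)
lemma add_closed'[intro,simp]: "x \<in> carrier R \<Longrightarrow> y \<in> carrier R \<Longrightarrow> x + y \<in> carrier R"
  by (simp add: carR Vsp_add)
lemma zero_closed'[intro,simp]: "0 \<in> carrier R"
  by (simp add: carR Vsp_zero)
lemma sum_closed'[intro]: "(\<And>i. i \<in> A \<Longrightarrow> f i \<in> carrier R) \<Longrightarrow> sum f A \<in> carrier R"
  by (simp add: carR Vsp_sum)

lemma r_null'[simp]: "x \<in> carrier R \<Longrightarrow> x \<otimes> 0 = 0"
  using r_null by simp
lemma l_null'[simp]: "x \<in> carrier R \<Longrightarrow> 0 \<otimes> x = 0"
  using l_null by simp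

lemma compat_left: "x \<in> carrier R \<Longrightarrow> y \<in> carrier R \<Longrightarrow> fscale c x \<otimes> y = fscale c (x \<otimes> y)"
  by (metis compat m_comm scale_closed)

lemma mult_sum_right: "x \<in> carrier R \<Longrightarrow> (\<And>i. i \<in> A \<Longrightarrow> f i \<in> carrier R) \<Longrightarrow>
    x \<otimes> sum f A = (\<Sum>i\<in>A. x \<otimes> f i)"
proof (induction A rule: infinite_finite_induct)
  case (insert a A)
  have "x \<otimes> sum f (insert a A) = x \<otimes> (f a \<oplus> sum f A)" using insert by simp
  also have "\<dots> = x \<otimes> f a \<oplus> x \<otimes> sum f A" using insert by (intro r_distr) auto
  finally show ?case using insert by simp
qed (auto)

lemma mult_sum_left: "x \<in> carrier R \<Longrightarrow> (\<And>i. i \<in> A \<Longrightarrow> f i \<in> carrier R) \<Longrightarrow>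
    sum f A \<otimes> x = (\<Sum>i\<in>A. f i \<otimes> x)"
  using mult_sum_right[of x A f] by (simp add: m_comm sum_closed')

lemma pow_scale: "x \<in> carrier R \<Longrightarrow> (fscale c x) [^] (n::nat) = fscale (c ^ n) (x [^] n)"
proof (induction n)
  case 0 thus ?case by (simp add: fscale_one)
next
  case (Suc n)
  have "fscale c x [^] Suc n = fscale (c ^ n) (x [^] n) \<otimes> fscale c x" using Suc by simp
  also have "\<dots> = fscale (c ^ Suc n) (x [^] Suc n)"
    using Suc by (simp add: compat compat_left fscale_fscale mult.commute)
  finally show ?case .
qed

lemma binomial_R:
  assumes x: "x \<in> carrier R" and y: "y \<in> carrier R"
  shows "(x + y) [^] (n::nat) = (\<Sum>k\<le>n. fscale (of_nat (n choose k)) (x [^] k \<otimes> y [^] (n - k)))"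
proof (induction n)
  case 0 thus ?case using x y by (simp add: fscale_one)
next
  case (Suc n)
  define t where "t = (\<lambda>k. fscale (of_nat (n choose k)) (x [^] k \<otimes> y [^] (n - k)))"
  have tc: "t k \<in> carrier R" for k using x y by (simp add: t_def)
  have "(x + y) [^] Suc n = sum t {..n} \<otimes> (x + y)" using Suc by (simp add: t_def)
  also have "\<dots> = sum t {..n} \<otimes> x + sum t {..n} \<otimes> y"
    using x y tc by (simp add: r_distr sum_closed' del: addR' flip: addR')
  also have "sum t {..n} \<otimes> x = (\<Sum>k\<le>n. t k \<otimes> x)"
    using x tc by (simp add: mult_sum_left)
  also have "\<dots> = (\<Sum>k\<le>n. fscale (of_nat (n choose k)) (x [^] Suc k \<otimes> y [^] (n - k)))"
  proof (rule sum.cong[OF refl])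
    fix k
    have "t k \<otimes> x = fscale (of_nat (n choose k)) (x [^] k \<otimes> y [^] (n - k) \<otimes> x)"
      unfolding t_def using x y by (intro compat_left) auto
    also have "x [^] k \<otimes> y [^] (n - k) \<otimes> x = x [^] Suc k \<otimes> y [^] (n - k)"
      using x y by (simp add: m_assoc m_comm[of _ x] nat_pow_Suc2)
    finally show "t k \<otimes> x = fscale (of_nat (n choose k)) (x [^] Suc k \<otimes> y [^] (n - k))" .
  qed
  also have "sum t {..n} \<otimes> y = (\<Sum>k\<le>n. t k \<otimes> y)"
    using y tc by (simp add: mult_sum_left)
  also have "\<dots> = (\<Sum>k\<le>n. fscale (of_nat (n choose k)) (x [^] k \<otimes> y [^] (Suc n - k)))"
  proof (rule sum.cong[OF refl])
    fix k assume "k \<in> {..n}"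
    have "t k \<otimes> y = fscale (of_nat (n choose k)) (x [^] k \<otimes> y [^] (n - k) \<otimes> y)"
      unfolding t_def using x y by (intro compat_left) auto
    also have "x [^] k \<otimes> y [^] (n - k) \<otimes> y = x [^] k \<otimes> y [^] (Suc n - k)"
      using x y \<open>k \<in> {..n}\<close> by (simp add: m_assoc Suc_diff_le)
    finally show "t k \<otimes> y = fscale (of_nat (n choose k)) (x [^] k \<otimes> y [^] (Suc n - k))" .
  qed
  also have "(\<Sum>k\<le>n. fscale (of_nat (n choose k)) (x [^] k \<otimes> y [^] (Suc n - k)))
      = y [^] Suc n + (\<Sum>k<n. fscale (of_nat (n choose Suc k)) (x [^] Suc k \<otimes> y [^] (n - k)))"
    using x y by (simp add: sum.atMost_shift lessThan_Suc_atMost fscale_one)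
  also have "(\<Sum>k<n. fscale (of_nat (n choose Suc k)) (x [^] Suc k \<otimes> y [^] (n - k)))
      = (\<Sum>k\<le>n. fscale (of_nat (n choose Suc k)) (x [^] Suc k \<otimes> y [^] (n - k)))"
    by (simp add: lessThan_Suc_atMost[symmetric] fscale_zero_left binomial_eq_0)
  finally have "(x + y) [^] Suc n = y [^] Suc n +
     ((\<Sum>k\<le>n. fscale (of_nat (n choose k)) (x [^] Suc k \<otimes> y [^] (n - k))) +
      (\<Sum>k\<le>n. fscale (of_nat (n choose Suc k)) (x [^] Suc k \<otimes> y [^] (n - k))))"
    by (simp add: ac_simps)
  also have "(\<Sum>k\<le>n. fscale (of_nat (n choose k)) (x [^] Suc k \<otimes> y [^] (n - k))) +
      (\<Sum>k\<le>n. fscale (of_nat (n choose Suc k)) (x [^] Suc k \<otimes> y [^] (n - k)))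
    = (\<Sum>k\<le>n. fscale (of_nat (Suc n choose Suc k)) (x [^] Suc k \<otimes> y [^] (Suc n - Suc k)))"
    by (simp add: sum.distrib[symmetric] fscale_add_left)
  also have "y [^] Suc n + \<dots> = (\<Sum>k\<le>Suc n. fscale (of_nat (Suc n choose k)) (x [^] k \<otimes> y [^] (Suc n - k)))"
    using x y by (simp add: sum.atMost_Suc_shift fscale_one del: sum.atMost_Suc)
  finally show ?case .
qed

lemma freshman_R:
  assumes x: "x \<in> carrier R" and y: "y \<in> carrier R"
  shows "(x + y) [^] CHAR('a) = x [^] CHAR('a) + y [^] CHAR('a)"
proof -
  define p where "p = CHAR('a)"
  have pp: "prime p" unfolding p_def by (rule ff_char_prime)
  hence p0: "p > 0" by (simp add: prime_gt_0_nat)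
  have "(x + y) [^] p = (\<Sum>k\<le>p. fscale (of_nat (p choose k)) (x [^] k \<otimes> y [^] (p - k)))"
    using binomial_R[OF x y] .
  also have "\<dots> = (\<Sum>k\<in>{0,p}. fscale (of_nat (p choose k)) (x [^] k \<otimes> y [^] (p - k)))"
  proof (intro sum.mono_neutral_right ballI)
    fix k assume "k \<in> {..p} - {0, p}"
    hence k: "k > 0" "k < p" by auto
    have "p dvd (p choose k)" using dvd_choose_prime[OF k(2) _ _ pp] k p0 by simp
    hence "of_nat (p choose k) = (0 :: 'a)"
      unfolding p_def using of_nat_eq_0_iff_char_dvd by blast
    thus "fscale (of_nat (p choose k)) (x [^] k \<otimes> y [^] (p - k)) = 0"
      by (simp add: fscale_zero_left)
  qed auto
  also have "\<dots> = x [^] p + y [^] p" using p0 x y by (simp add: fscale_one add.commute)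
  finally show ?thesis unfolding p_def .
qed

lemma freshman_pow_R:
  assumes x: "x \<in> carrier R" and y: "y \<in> carrier R"
  shows "(x + y) [^] (CHAR('a) ^ e) = x [^] (CHAR('a) ^ e) + y [^] (CHAR('a) ^ e)"
proof (induction e)
  case (Suc e)
  have "(x + y) [^] (CHAR('a) ^ Suc e) = ((x + y) [^] (CHAR('a) ^ e)) [^] CHAR('a)"
    using x y by (simp add: nat_pow_pow mult.commute)
  also have "\<dots> = (x [^] (CHAR('a) ^ e)) [^] CHAR('a) + (y [^] (CHAR('a) ^ e)) [^] CHAR('a)"
    using Suc x y by (simp add: freshman_R)
  finally show ?case using x y by (simp add: nat_pow_pow mult.commute)
qed (use x y in simp)

lemma frob_add:
  assumes x: "x \<in> carrier R" and y: "y \<in> carrier R"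
  shows "(x + y) [^] (card (UNIV::'a set) ^ i) = x [^] (card (UNIV::'a set) ^ i) + y [^] (card (UNIV::'a set) ^ i)"
proof -
  obtain e where e: "card (UNIV :: 'a set) = CHAR('a) ^ e" using ff_card_char_power by blast
  show ?thesis unfolding e power_mult[symmetric] by (rule freshman_pow_R[OF x y])
qed

lemma frob_scale:
  assumes x: "x \<in> carrier R"
  shows "(fscale c x) [^] (card (UNIV::'a set) ^ i) = fscale c (x [^] (card (UNIV::'a set) ^ i))"
  using x by (simp add: pow_scale ff_power_card_pow)

lemma linpoly_closed: "(\<And>i. i < k \<Longrightarrow> f i \<in> carrier R) \<Longrightarrow> x \<in> carrier R \<Longrightarrow> linpoly R k f x \<in> carrier R"
  unfolding linpoly_def by (intro sum_closed') auto

lemma linpoly_add: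
  assumes f: "\<And>i. i < k \<Longrightarrow> f i \<in> carrier R" and x: "x \<in> carrier R" and y: "y \<in> carrier R"
  shows "linpoly R k f (x + y) = linpoly R k f x + linpoly R k f y"
  unfolding linpoly_def using f x y
  by (simp add: frob_add r_distr[simplified addR'] sum.distrib flip: sum.distrib)

lemma linpoly_scale:
  assumes f: "\<And>i. i < k \<Longrightarrow> f i \<in> carrier R" and x: "x \<in> carrier R"
  shows "linpoly R k f (fscale c x) = fscale c (linpoly R k f x)"
  unfolding linpoly_def using f x
  by (simp add: frob_scale compat V.scale_sum_right)

end


lemma finite_Vsp: "finite (Vsp m :: (nat \<Rightarrow> 'a::{zero,finite}) set)"
proof -
  have "Vsp m \<subseteq> (\<lambda>xs i. if i < m then xs ! i else 0) ` {xs :: 'a list. set xs \<subseteq> UNIV \<and> length xs = m}"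
  proof
    fix v :: "nat \<Rightarrow> 'a" assume v: "v \<in> Vsp m"
    show "v \<in> (\<lambda>xs i. if i < m then xs ! i else 0) ` {xs. set xs \<subseteq> UNIV \<and> length xs = m}"
      using v by (intro image_eqI[of _ _ "map v [0..<m]"]) (auto simp: Vsp_def fun_eq_iff)
  qed
  moreover have "finite {xs :: 'a list. set xs \<subseteq> UNIV \<and> length xs = m}"
    by (rule finite_lists_length_eq) simp
  ultimately show ?thesis by (rule finite_subset[OF _ finite_imageI])
qed

primrec lpoly :: "(nat \<Rightarrow> 'a::{field,finite}) ring \<Rightarrow> (nat \<Rightarrow> nat \<Rightarrow> 'a) \<Rightarrow> nat \<Rightarrow> nat \<Rightarrow> (nat \<Rightarrow> 'a)" where
  "lpoly R f 0 = monom (UP R) \<zero>\<^bsub>R\<^esub> 0"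
| "lpoly R f (Suc j) = lpoly R f j \<oplus>\<^bsub>UP R\<^esub> monom (UP R) (f j) (card (UNIV::'a set) ^ j)"

context Rsetup
begin

interpretation UPD: UP_domain R "UP R" by unfold_locales

lemma q_ge2: "card (UNIV :: 'a set) \<ge> 2"
proof -
  have "{0::'a, 1} \<subseteq> UNIV" by simp
  hence "card {0::'a, 1} \<le> card (UNIV :: 'a set)" by (intro card_mono) auto
  thus ?thesis by simp
qed

lemma lpoly_closed: "(\<And>i. i < j \<Longrightarrow> f i \<in> carrier R) \<Longrightarrow> lpoly R f j \<in> carrier (UP R)"
  by (induction j) auto

lemma lpoly_coeff: "(\<And>i. i < j \<Longrightarrow> f i \<in> carrier R) \<Longrightarrow>
   coeff (UP R) (lpoly R f j) (card (UNIV :: 'a set) ^ i) = (if i < j then f i else \<zero>)"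
proof (induction j)
  case 0 thus ?case by simp
next
  case (Suc j)
  have inj: "card (UNIV :: 'a set) ^ i = card (UNIV :: 'a set) ^ j \<longleftrightarrow> i = j"
    using q_ge2 by (simp add: power_inject_exp)
  show ?case using Suc lpoly_closed[of j f] inj by (auto simp: less_Suc_eq)
qed

lemma lpoly_deg: "(\<And>i. i < j \<Longrightarrow> f i \<in> carrier R) \<Longrightarrow>
   deg R (lpoly R f j) \<le> card (UNIV :: 'a set) ^ (j - 1)"
proof (induction j)
  case 0 thus ?case by simp
next
  case (Suc j)
  have "deg R (lpoly R f (Suc j)) \<le> max (deg R (lpoly R f j)) (deg R (monom (UP R) (f j) (card (UNIV::'a set) ^ j)))"
    using Suc lpoly_closed[of j f] by simp
  also have "\<dots> \<le> max (card (UNIV :: 'a set) ^ (j - 1)) (card (UNIV::'a set) ^ j)"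
    using Suc by (intro max.mono UPD.deg_monom_le) auto
  also have "\<dots> = card (UNIV::'a set) ^ j"
    using q_ge2 by (intro max_absorb2 power_increasing) auto
  finally show ?case by simp
qed

lemma lpoly_eval: "(\<And>i. i < j \<Longrightarrow> f i \<in> carrier R) \<Longrightarrow> x \<in> carrier R \<Longrightarrow>
   eval R R id x (lpoly R f j) = linpoly R j f x"
proof (induction j)
  case 0
  have "eval R R id x (monom (UP R) \<zero> 0) = \<zero> \<otimes> x [^] (0::nat)"
    using 0 by (intro UPD.evalRR_monom) auto
  thus ?case using 0 by (simp add: linpoly_def id_def)
next
  case (Suc j)
  thus ?case using lpoly_closed[of j f]
      UPD.evalRR_add[of "lpoly R f j" "monom (UP R) (f j) (card (UNIV::'a set) ^ j)" x]
      UPD.evalRR_monom[of "f j" x "card (UNIV::'a set) ^ j"]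
    by (simp add: linpoly_def id_def)
qed

lemma linpoly_roots:
  assumes f: "\<And>i. i < k \<Longrightarrow> f i \<in> carrier R" and g: "\<And>i. i < k \<Longrightarrow> g i \<in> carrier R"
    and i0: "i0 < k" "f i0 \<noteq> g i0"
  shows "finite {x \<in> carrier R. linpoly R k f x = linpoly R k g x} \<and>
         card {x \<in> carrier R. linpoly R k f x = linpoly R k g x} \<le> card (UNIV :: 'a set) ^ (k - 1)"
proof -
  define d where "d = lpoly R f k \<ominus>\<^bsub>UP R\<^esub> lpoly R g k"
  have pf: "lpoly R f k \<in> carrier (UP R)" using f by (rule lpoly_closed)
  have pg: "lpoly R g k \<in> carrier (UP R)" using g by (rule lpoly_closed)
  have dc: "d \<in> carrier (UP R)" unfolding d_def using pf pg by simp
  have c: "coeff (UP R) d (card (UNIV :: 'a set) ^ i0) = f i0 \<ominus> g i0"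
    unfolding d_def using pf pg lpoly_coeff[of k f i0] lpoly_coeff[of k g i0] f g i0 by simp
  have "f i0 \<ominus> g i0 \<noteq> \<zero>" using i0 f g r_right_minus_eq[of "f i0" "g i0"] by simp
  hence dnz: "d \<noteq> \<zero>\<^bsub>UP R\<^esub>" using c by auto
  have "deg R d \<le> max (deg R (lpoly R f k)) (deg R (\<ominus>\<^bsub>UP R\<^esub> lpoly R g k))"
    unfolding d_def a_minus_def using pf pg UPD.deg_add[of "lpoly R f k" "\<ominus>\<^bsub>UP R\<^esub> lpoly R g k"] by simp
  also have "\<dots> \<le> card (UNIV :: 'a set) ^ (k - 1)" using lpoly_deg[of k f] lpoly_deg[of k g] f g pg by simp
  finally have dd: "deg R d \<le> card (UNIV :: 'a set) ^ (k - 1)" .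
  have fin: "finite (carrier R)" by (simp add: carR finite_Vsp)
  have eq: "{x \<in> carrier R. linpoly R k f x = linpoly R k g x} = {a \<in> carrier R. eval R R id a d = \<zero>}"
  proof (intro Collect_cong conj_cong refl)
    fix x assume x: "x \<in> carrier R"
    have "eval R R id x d = linpoly R k f x \<ominus> linpoly R k g x"
      unfolding d_def using x pf pg f g by (simp add: UPD.evalRR_simps lpoly_eval)
    thus "(linpoly R k f x = linpoly R k g x) = (eval R R id x d = \<zero>)"
      using x f g linpoly_closed[of k f x] linpoly_closed[of k g x]
        r_right_minus_eq[of "linpoly R k f x" "linpoly R k g x"] by simp
  qed
  show ?thesis unfolding eq using UPD.roots_bound[OF dc dnz fin] dd by simp
qed

end


lemma (in vector_space) span_Int_disjoint:
  assumes T: "independent T" and A: "A \<subseteq> T" and B: "B \<subseteq> T" and AB: "A \<inter> B = {}"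
    and x: "x \<in> span A" "x \<in> span B"
  shows "x = 0"
proof -
  have iA: "independent A" using T A by (auto intro: dependent_mono)
  have eA: "representation T x = representation A x" using representation_extend[OF T x(1) A] .
  have eB: "representation T x = representation B x" using representation_extend[OF T x(2) B] .
  have z: "representation A x b = 0" for b
  proof (rule ccontr)
    assume "representation A x b \<noteq> 0"
    hence "b \<in> A" "representation B x b \<noteq> 0" using representation_ne_zero eA eB by metis+
    hence "b \<in> B" using representation_ne_zero by metis
    thus False using \<open>b \<in> A\<close> AB by auto
  qed
  have "x = (\<Sum>b | representation A x b \<noteq> 0. representation A x b *s b)"
    using sum_nonzero_representation_eq[OF iA x(1)] by simp
  also have "\<dots> = 0" using z by simp
  finally show ?thesis .
qed

lemma (in vector_space) card_span_ge:
  assumes B: "finite B" "independent B" and fin: "finite (span B)"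
  shows "card (UNIV :: 'a set) ^ card B \<le> card (span B)"
proof -
  define F where "F = (\<lambda>c. \<Sum>b\<in>B. c b *s b)"
  have nd: "\<And>u. (\<Sum>v\<in>B. u v *s v) = 0 \<Longrightarrow> v \<in> B \<Longrightarrow> u v = 0" for v
    using dependent_finite[OF B(1)] B(2) by blast
  have "inj_on F (B \<rightarrow>\<^sub>E UNIV)"
  proof (rule inj_onI)
    fix c c' assume c: "c \<in> B \<rightarrow>\<^sub>E UNIV" and c': "c' \<in> B \<rightarrow>\<^sub>E UNIV" and eq: "F c = F c'"
    have "(\<Sum>b\<in>B. (c b - c' b) *s b) = F c - F c'"
      by (simp add: F_def scale_left_diff_distrib sum_subtractf)
    hence s0: "(\<Sum>b\<in>B. (c b - c' b) *s b) = 0" using eq by simp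
    have "c b = c' b" if "b \<in> B" for b
      using nd[of "\<lambda>b. c b - c' b", OF s0 that] by simp
    moreover have "c b = c' b" if "b \<notin> B" for b
      using c c' that by (simp add: PiE_def extensional_def)
    ultimately show "c = c'" by blast
  qed
  moreover have "F ` (B \<rightarrow>\<^sub>E UNIV) \<subseteq> span B"
  proof
    fix x assume "x \<in> F ` (B \<rightarrow>\<^sub>E UNIV)"
    then obtain c where "x = F c" by blast
    have "\<And>b. b \<in> B \<Longrightarrow> c b *s b \<in> span B" by (intro span_scale span_base)
    hence "(\<Sum>b\<in>B. c b *s b) \<in> span B" by (rule span_sum)
    thus "x \<in> span B" unfolding F_def using \<open>x = F c\<close> F_def by simp
  qed
  ultimately have "card (B \<rightarrow>\<^sub>E (UNIV :: 'a set)) \<le> card (span B)"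
    using card_inj_on_le[OF _ _ fin] by blast
  thus ?thesis using B by (simp add: card_PiE)
qed

lemma indep_from_image:
  fixes g :: "(nat \<Rightarrow> 'a::field) \<times> (nat \<Rightarrow> 'a) \<Rightarrow> (nat \<Rightarrow> 'a)"
  assumes g: "Vector_Spaces.linear pscale fscale g" and inj: "inj_on g T"
    and ind: "findependent (g ` T)"
  shows "\<not> P.dependent T"
proof
  assume "P.dependent T"
  then obtain a where a: "a \<in> T" "a \<in> P.span (T - {a})" using P.dependent_def by blast
  hence "g a \<in> g ` P.span (T - {a})" by blast
  also have "\<dots> = fspan (g ` (T - {a}))" using VP.linear_span_image[OF g] by simp
  also have "g ` (T - {a}) = g ` T - {g a}" using inj a(1) by (auto simp: inj_on_def)
  finally show False using ind a(1) V.dependent_def by blast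
qed

lemma Vsp_subspace: "fsubspace (Vsp m :: (nat \<Rightarrow> 'a::field) set)"
  unfolding V.subspace_def using Vsp_zero Vsp_add Vsp_scale by blast

lemma fspan_Vsp: "S \<subseteq> Vsp m \<Longrightarrow> fspan S \<subseteq> (Vsp m :: (nat \<Rightarrow> 'a::field) set)"
  using V.span_minimal[OF _ Vsp_subspace] by blast

lemma graph_span:
  fixes L :: "(nat \<Rightarrow> 'a::field) \<Rightarrow> (nat \<Rightarrow> 'a)"
  assumes Ladd: "\<And>x y. x \<in> Vsp m \<Longrightarrow> y \<in> Vsp m \<Longrightarrow> L (x + y) = L x + L y"
    and Lscale: "\<And>c x. x \<in> Vsp m \<Longrightarrow> L (fscale c x) = fscale c (L x)"
    and S: "S \<subseteq> Vsp m"
  shows "P.span ((\<lambda>s. (s, L s)) ` S) = {(a, L a) | a. a \<in> fspan S}"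
proof
  have L0: "L 0 = 0" using Lscale[of 0 0] Vsp_zero[of m] by (simp add: fscale_zero_left)
  have sub: "P.subspace {(a, L a) | a. a \<in> fspan S}"
    unfolding P.subspace_def
  proof (intro conjI allI impI ballI)
    show "0 \<in> {(a, L a) |a. a \<in> fspan S}" using L0 V.span_zero
      by (auto simp: zero_prod_def intro!: exI[of _ 0])
  next
    fix x y assume x: "x \<in> {(a, L a) |a. a \<in> fspan S}" and y: "y \<in> {(a, L a) |a. a \<in> fspan S}"
    then obtain a b where ab: "x = (a, L a)" "y = (b, L b)" "a \<in> fspan S" "b \<in> fspan S" by blast
    hence "a \<in> Vsp m" "b \<in> Vsp m" using fspan_Vsp[OF S] by auto
    thus "x + y \<in> {(a, L a) |a. a \<in> fspan S}" using ab Ladd V.span_add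
      by (auto intro!: exI[of _ "a + b"])
  next
    fix c x assume x: "x \<in> {(a, L a) |a. a \<in> fspan S}"
    then obtain a where ab: "x = (a, L a)" "a \<in> fspan S" by blast
    hence "a \<in> Vsp m" using fspan_Vsp[OF S] by auto
    thus "pscale c x \<in> {(a, L a) |a. a \<in> fspan S}" using ab Lscale V.span_scale
      by (auto simp: pscale_def intro!: exI[of _ "fscale c a"])
  qed
  show "P.span ((\<lambda>s. (s, L s)) ` S) \<subseteq> {(a, L a) |a. a \<in> fspan S}"
    by (rule P.span_minimal[OF _ sub]) (auto intro: V.span_base)
next
  define W where "W = {a \<in> Vsp m. (a, L a) \<in> P.span ((\<lambda>s. (s, L s)) ` S)}"
  have L0: "L 0 = 0" using Lscale[of 0 0] Vsp_zero[of m] by (simp add: fscale_zero_left)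
  have sub: "fsubspace W"
    unfolding V.subspace_def W_def
  proof (intro conjI allI impI ballI)
    show "0 \<in> {a \<in> Vsp m. (a, L a) \<in> P.span ((\<lambda>s. (s, L s)) ` S)}"
      using L0 Vsp_zero[of m] P.span_zero[of "(\<lambda>s. (s, L s)) ` S"] by (simp add: zero_prod_def)
  next
    fix x y assume x: "x \<in> {a \<in> Vsp m. (a, L a) \<in> P.span ((\<lambda>s. (s, L s)) ` S)}"
      and y: "y \<in> {a \<in> Vsp m. (a, L a) \<in> P.span ((\<lambda>s. (s, L s)) ` S)}"
    have "(x, L x) + (y, L y) \<in> P.span ((\<lambda>s. (s, L s)) ` S)" using x y P.span_add by blast
    thus "x + y \<in> {a \<in> Vsp m. (a, L a) \<in> P.span ((\<lambda>s. (s, L s)) ` S)}"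
      using x y Ladd Vsp_add by auto
  next
    fix c x assume x: "x \<in> {a \<in> Vsp m. (a, L a) \<in> P.span ((\<lambda>s. (s, L s)) ` S)}"
    have "pscale c (x, L x) \<in> P.span ((\<lambda>s. (s, L s)) ` S)" using x P.span_scale by blast
    thus "fscale c x \<in> {a \<in> Vsp m. (a, L a) \<in> P.span ((\<lambda>s. (s, L s)) ` S)}"
      using x Lscale Vsp_scale by (auto simp: pscale_def)
  qed
  have "S \<subseteq> W" unfolding W_def using S by (auto intro: P.span_base)
  hence "fspan S \<subseteq> W" using V.span_minimal[OF _ sub] by blast
  thus "{(a, L a) |a. a \<in> fspan S} \<subseteq> P.span ((\<lambda>s. (s, L s)) ` S)"
    unfolding W_def by blast
qed

lemma graph_indep:
  fixes L :: "(nat \<Rightarrow> 'a::field) \<Rightarrow> (nat \<Rightarrow> 'a)"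
  assumes "findependent S"
  shows "\<not> P.dependent ((\<lambda>s. (s, L s)) ` S)" "card ((\<lambda>s. (s, L s)) ` S) = card S"
proof -
  have inj: "inj_on fst ((\<lambda>s. (s, L s)) ` S)" by (auto simp: inj_on_def)
  have im: "fst ` ((\<lambda>s. (s, L s)) ` S) = S" by force
  show "\<not> P.dependent ((\<lambda>s. (s, L s)) ` S)"
    using indep_from_image[OF lin_fst inj] im assms by simp
  show "card ((\<lambda>s. (s, L s)) ` S) = card S" by (rule card_image) (auto simp: inj_on_def)
qed


context Rsetup
begin

lemma Esp_gen: "Esp R \<alpha> l k f = P.span ((\<lambda>s. (s, linpoly R k f s)) ` (\<alpha> ` {1..l}))"
  unfolding Esp_def by (simp add: image_image)

lemma Esp_eq:
  assumes f: "\<forall>i<k. f i \<in> carrier R" and A: "\<alpha> ` {1..l} \<subseteq> Vsp m"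
  shows "Esp R \<alpha> l k f = {(a, linpoly R k f a) | a. a \<in> fspan (\<alpha> ` {1..l})}"
  unfolding Esp_gen
  by (rule graph_span) (use f A in \<open>auto simp: carR intro: linpoly_add linpoly_scale\<close>)

lemma Esp_dim:
  assumes A: "inj_on \<alpha> {1..l}" "findependent (\<alpha> ` {1..l})"
  shows "P.dim (Esp R \<alpha> l k f) = l"
proof -
  have "P.dim (Esp R \<alpha> l k f) = card ((\<lambda>s. (s, linpoly R k f s)) ` (\<alpha> ` {1..l}))"
    unfolding Esp_gen using graph_indep(1)[OF A(2)] by (rule P.dim_span_eq_card_independent)
  also have "\<dots> = card (\<alpha> ` {1..l})" using graph_indep(2)[OF A(2)] .
  also have "\<dots> = l" using A(1) by (simp add: card_image)
  finally show ?thesis .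
qed

lemma Esp_sub:
  assumes f: "\<forall>i<k. f i \<in> carrier R" and A: "\<alpha> ` {1..l} \<subseteq> Vsp m"
  shows "Esp R \<alpha> l k f \<subseteq> {(a, b). a \<in> fspan (\<alpha> ` {1..l}) \<and> b \<in> Vsp m}"
  unfolding Esp_eq[OF f A] using fspan_Vsp[OF A] linpoly_closed f by (auto simp: carR)

lemma Esp_int:
  assumes f: "\<forall>i<k. f i \<in> carrier R" and g: "\<forall>i<k. g i \<in> carrier R"
    and A: "\<alpha> ` {1..l} \<subseteq> Vsp m"
    and ne: "Esp R \<alpha> l k f \<noteq> Esp R \<alpha> l k g"
  shows "P.dim (Esp R \<alpha> l k f \<inter> Esp R \<alpha> l k g) \<le> k - 1"
proof -
  define Q where "Q = card (UNIV :: 'a set)"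
  have "\<exists>i0<k. f i0 \<noteq> g i0"
  proof (rule ccontr)
    assume "\<not> (\<exists>i0<k. f i0 \<noteq> g i0)"
    hence "\<And>x. linpoly R k f x = linpoly R k g x" unfolding linpoly_def by (intro sum.cong) auto
    hence "linpoly R k f = linpoly R k g" by (rule ext)
    hence "Esp R \<alpha> l k f = Esp R \<alpha> l k g" unfolding Esp_def by simp
    thus False using ne by simp
  qed
  then obtain i0 where i0: "i0 < k" "f i0 \<noteq> g i0" by blast
  define X where "X = Esp R \<alpha> l k f \<inter> Esp R \<alpha> l k g"
  have Xsub: "P.subspace X" unfolding X_def Esp_def by (intro P.subspace_inter P.subspace_span)
  have Xeq: "X = {(a, linpoly R k f a) | a. a \<in> fspan (\<alpha> ` {1..l}) \<and> linpoly R k f a = linpoly R k g a}"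
  proof
    show "X \<subseteq> {(a, linpoly R k f a) | a. a \<in> fspan (\<alpha> ` {1..l}) \<and> linpoly R k f a = linpoly R k g a}"
    proof
      fix x assume "x \<in> X"
      then obtain a b where ab: "x = (a, linpoly R k f a)" "a \<in> fspan (\<alpha> ` {1..l})"
        "x = (b, linpoly R k g b)"
        unfolding X_def Esp_eq[OF f A] Esp_eq[OF g A] by blast
      thus "x \<in> {(a, linpoly R k f a) | a. a \<in> fspan (\<alpha> ` {1..l}) \<and> linpoly R k f a = linpoly R k g a}"
        by auto
    qed
    show "{(a, linpoly R k f a) | a. a \<in> fspan (\<alpha> ` {1..l}) \<and> linpoly R k f a = linpoly R k g a} \<subseteq> X"
      unfolding X_def Esp_eq[OF f A] Esp_eq[OF g A] by force
  qed
  have injX: "inj_on fst X" unfolding Xeq by (auto simp: inj_on_def)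
  have fX: "fst ` X \<subseteq> {x \<in> carrier R. linpoly R k f x = linpoly R k g x}"
    unfolding Xeq using fspan_Vsp[OF A] by (auto simp: carR)
  have roots: "finite {x \<in> carrier R. linpoly R k f x = linpoly R k g x}"
    "card {x \<in> carrier R. linpoly R k f x = linpoly R k g x} \<le> Q ^ (k - 1)"
    using linpoly_roots[of k f g i0] f g i0 unfolding Q_def by auto
  have finX: "finite X" using finite_subset[OF fX roots(1)] injX finite_imageD by blast
  have cX: "card X \<le> Q ^ (k - 1)"
    using card_image[OF injX] card_mono[OF roots(1) fX] roots(2) by simp
  obtain B where B: "B \<subseteq> X" "\<not> P.dependent B" "X \<subseteq> P.span B" "card B = P.dim X"
    using P.basis_exists by blast
  have finB: "finite B" using B(1) finX finite_subset by blast
  have spB: "P.span B \<subseteq> X" using P.span_minimal[OF B(1) Xsub] .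
  have "Q ^ card B \<le> card (P.span B)"
    unfolding Q_def using P.card_span_ge[OF finB B(2)] finite_subset[OF spB finX] by simp
  also have "\<dots> \<le> card X" using card_mono[OF finX spB] .
  also have "\<dots> \<le> Q ^ (k - 1)" using cX .
  finally have "card B \<le> k - 1" using q_ge2 unfolding Q_def by (intro power_le_imp_le_exp) auto
  thus ?thesis using B(4) unfolding X_def by simp
qed

end


lemma fst_span: "x \<in> P.span T \<Longrightarrow> fst x \<in> fspan (fst ` T)"
  using VP.linear_span_image[OF lin_fst, of T] by blast
lemma snd_span: "x \<in> P.span T \<Longrightarrow> snd x \<in> fspan (snd ` T)"
  using VP.linear_span_image[OF lin_snd, of T] by blast

lemma lin_pair0: "Vector_Spaces.linear fscale pscale (\<lambda>v::nat \<Rightarrow> 'a::field. (0::nat \<Rightarrow> 'a, v))"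
  by (rule Vector_Spaces.linear_iff[THEN iffD2]) (simp add: pscale_def vs_f vs_p V.scale_zero_right)

definition blk :: "(nat \<Rightarrow> nat \<Rightarrow> 'a::zero) \<Rightarrow> nat set \<Rightarrow> (nat \<Rightarrow> nat \<Rightarrow> 'a) \<Rightarrow> nat set \<Rightarrow> ((nat \<Rightarrow> 'a) \<times> (nat \<Rightarrow> 'a)) set" where
  "blk \<alpha> J e I = (\<lambda>j. (\<alpha> j, 0)) ` J \<union> (\<lambda>j. (0, e j)) ` I"

lemma blk_fst: "fst ` blk \<alpha> J e I \<subseteq> insert 0 (\<alpha> ` J)"
  unfolding blk_def by auto
lemma blk_snd: "snd ` blk \<alpha> J e I \<subseteq> insert 0 (e ` I)"
  unfolding blk_def by auto

lemma blk_fst_span: "x \<in> P.span (blk \<alpha> J e I) \<Longrightarrow> fst x \<in> fspan (\<alpha> ` J)"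
proof -
  assume "x \<in> P.span (blk \<alpha> J e I)"
  hence "fst x \<in> fspan (fst ` blk \<alpha> J e I)" by (rule fst_span)
  also have "\<dots> \<subseteq> fspan (insert 0 (\<alpha> ` J))" by (rule V.span_mono[OF blk_fst])
  finally show ?thesis by (simp only: V.span_insert_0)
qed
lemma blk_snd_span: "x \<in> P.span (blk \<alpha> J e I) \<Longrightarrow> snd x \<in> fspan (e ` I)"
proof -
  assume "x \<in> P.span (blk \<alpha> J e I)"
  hence "snd x \<in> fspan (snd ` blk \<alpha> J e I)" by (rule snd_span)
  also have "\<dots> \<subseteq> fspan (insert 0 (e ` I))" by (rule V.span_mono[OF blk_snd])
  finally show ?thesis by (simp only: V.span_insert_0)
qed


lemma blk_indep:
  fixes \<alpha> e :: "nat \<Rightarrow> nat \<Rightarrow> 'a::field"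
  assumes J: "J \<subseteq> L" and fJ: "finite J" and fI: "finite I" and ia: "inj_on \<alpha> L" and da: "findependent (\<alpha> ` L)"
    and ie: "inj_on e I" and de: "findependent (e ` I)"
  shows "\<not> P.dependent (blk \<alpha> J e I)" "card (blk \<alpha> J e I) = card J + card I"
proof -
  have a0: "\<alpha> j \<noteq> 0" if "j \<in> L" for j
  proof
    assume "\<alpha> j = 0"
    hence "0 \<in> \<alpha> ` L" using that by (metis image_eqI)
    thus False using da V.dependent_zero by metis
  qed
  show "\<not> P.dependent (blk \<alpha> J e I)"
  proof
    assume "P.dependent (blk \<alpha> J e I)"
    then obtain x where x: "x \<in> blk \<alpha> J e I" "x \<in> P.span (blk \<alpha> J e I - {x})"
      using P.dependent_def by blast
    have fx: "fst x \<in> fspan (fst ` (blk \<alpha> J e I - {x}))" using fst_span[OF x(2)] .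
    have sx: "snd x \<in> fspan (snd ` (blk \<alpha> J e I - {x}))" using snd_span[OF x(2)] .
    show False
    proof (cases "x \<in> (\<lambda>j. (\<alpha> j, 0)) ` J")
      case True
      then obtain j where j: "j \<in> J" "x = (\<alpha> j, 0)" by blast
      have "fst ` (blk \<alpha> J e I - {x}) \<subseteq> insert 0 (\<alpha> ` L - {\<alpha> j})"
        using j J by (auto simp: blk_def)
      hence "\<alpha> j \<in> fspan (\<alpha> ` L - {\<alpha> j})"
        using fx j V.span_mono[of "fst ` (blk \<alpha> J e I - {x})" "insert 0 (\<alpha> ` L - {\<alpha> j})"] by auto
      moreover have "\<alpha> j \<in> \<alpha> ` L" using j J by auto
      ultimately show False using da unfolding V.dependent_def by blast
    next
      case False
      then obtain i where i: "i \<in> I" "x = (0, e i)" using x(1) by (auto simp: blk_def)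
      have "snd ` (blk \<alpha> J e I - {x}) \<subseteq> insert 0 (e ` I - {e i})"
        using i by (auto simp: blk_def)
      hence "e i \<in> fspan (e ` I - {e i})"
        using sx i V.span_mono[of "snd ` (blk \<alpha> J e I - {x})" "insert 0 (e ` I - {e i})"] by auto
      moreover have "e i \<in> e ` I" using i by auto
      ultimately show False using de unfolding V.dependent_def by blast
    qed
  qed
  have disj: "(\<lambda>j. (\<alpha> j, 0)) ` J \<inter> (\<lambda>j. (0, e j)) ` I = {}"
    using a0 J by auto
  have c1: "card ((\<lambda>j. (\<alpha> j, 0)) ` J) = card J"
    using ia J by (intro card_image) (auto simp: inj_on_def)
  have c2: "card ((\<lambda>j. (0::nat \<Rightarrow> 'a, e j)) ` I) = card I"
    using ie by (intro card_image) (auto simp: inj_on_def)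
  show "card (blk \<alpha> J e I) = card J + card I"
    unfolding blk_def using card_Un_disjoint[OF finite_imageI[OF fJ] finite_imageI[OF fI] disj] c1 c2 by simp
qed


lemma transport:
  assumes lin: "Vector_Spaces.linear pscale fscale \<phi>" and inj: "inj_on \<phi> D"
    and XD: "X \<subseteq> D" and sub: "P.subspace X" and XF: "X \<subseteq> P.span F" and fF: "finite F"
  shows "fdim (\<phi> ` X) = P.dim X" "fsubspace (\<phi> ` X)"
proof -
  obtain B where B: "B \<subseteq> X" "\<not> P.dependent B" "X \<subseteq> P.span B" "card B = P.dim X"
    using P.basis_exists by blast
  have finB: "finite B" using P.independent_span_bound[OF fF B(2)] B(1) XF by blast
  have XB: "X = P.span B" using P.span_minimal[OF B(1) sub] B(3) by blast
  have injB: "inj_on \<phi> (P.span B)" using inj XD XB inj_on_subset by blast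
  have indB: "findependent (\<phi> ` B)"
    using VP.linear_independent_injective_image[OF lin B(2) injB] .
  have "\<phi> ` X = fspan (\<phi> ` B)" using XB VP.linear_span_image[OF lin] by simp
  hence "fdim (\<phi> ` X) = card (\<phi> ` B)" using V.dim_span_eq_card_independent[OF indB] by simp
  also have "\<dots> = card B" using inj_on_subset[OF injB P.span_superset] by (rule card_image)
  finally show "fdim (\<phi> ` X) = P.dim X" using B(4) by simp
  show "fsubspace (\<phi> ` X)" using VP.linear_subspace_image[OF lin sub] .
qed

lemma transport_int:
  assumes lin: "Vector_Spaces.linear pscale fscale \<phi>" and inj: "inj_on \<phi> D"
    and XD: "X \<subseteq> D" and YD: "Y \<subseteq> D" and subX: "P.subspace X" and subY: "P.subspace Y"
    and XF: "X \<subseteq> P.span F" and fF: "finite F"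
  shows "fdim (\<phi> ` X \<inter> \<phi> ` Y) = P.dim (X \<inter> Y)"
proof -
  have "\<phi> ` X \<inter> \<phi> ` Y = \<phi> ` (X \<inter> Y)" using inj_on_image_Int[OF inj XD YD] by simp
  moreover have "fdim (\<phi> ` (X \<inter> Y)) = P.dim (X \<inter> Y)"
    using transport(1)[OF lin inj _ P.subspace_inter[OF subX subY] _ fF] XD XF by blast
  ultimately show ?thesis by simp
qed

lemma Dom_subspace: "P.subspace {(a, b). a \<in> fspan A \<and> b \<in> (Vsp m :: (nat \<Rightarrow> 'a::field) set)}"
  unfolding P.subspace_def
  using V.span_zero V.span_add V.span_scale Vsp_zero Vsp_add Vsp_scale
  by (auto simp: pscale_def zero_prod_def)

lemma blk_Dom:
  assumes "\<alpha> ` J \<subseteq> fspan A" "e ` I \<subseteq> Vsp m"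
  shows "P.span (blk \<alpha> J e I) \<subseteq> {(a, b). a \<in> fspan A \<and> b \<in> (Vsp m :: (nat \<Rightarrow> 'a::field) set)}"
  by (rule P.span_minimal[OF _ Dom_subspace]) (use assms V.span_zero Vsp_zero in \<open>auto simp: blk_def\<close>)

lemma blk_finite: "finite J \<Longrightarrow> finite I \<Longrightarrow> finite (blk \<alpha> J e I)"
  unfolding blk_def by simp

context Rsetup
begin

lemma Esp_blk_int:
  assumes f: "\<forall>i<k. f i \<in> carrier R" and A: "\<alpha> ` {1..l} \<subseteq> Vsp m"
    and J: "J \<subseteq> {1..l}" "finite J"
  shows "P.dim (Esp R \<alpha> l k f \<inter> P.span (blk \<alpha> J e I)) \<le> card J"
proof -
  define L where "L = linpoly R k f"
  have AJ: "\<alpha> ` J \<subseteq> Vsp m" using A J by auto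
  have gs: "P.span ((\<lambda>s. (s, L s)) ` (\<alpha> ` J)) = {(a, L a) | a. a \<in> fspan (\<alpha> ` J)}"
    unfolding L_def by (rule graph_span) (use f AJ in \<open>auto simp: carR intro: linpoly_add linpoly_scale\<close>)
  have "Esp R \<alpha> l k f \<inter> P.span (blk \<alpha> J e I) \<subseteq> P.span ((\<lambda>s. (s, L s)) ` (\<alpha> ` J))"
  proof
    fix x assume x: "x \<in> Esp R \<alpha> l k f \<inter> P.span (blk \<alpha> J e I)"
    then obtain a where a: "x = (a, L a)" unfolding Esp_eq[OF f A] L_def by blast
    have "a \<in> fspan (\<alpha> ` J)" using blk_fst_span[of x \<alpha> J e I] x a by simp
    thus "x \<in> P.span ((\<lambda>s. (s, L s)) ` (\<alpha> ` J))" unfolding gs using a by blast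
  qed
  hence "P.dim (Esp R \<alpha> l k f \<inter> P.span (blk \<alpha> J e I)) \<le> card ((\<lambda>s. (s, L s)) ` (\<alpha> ` J))"
    using J(2) by (intro P.dim_le_card) auto
  also have "\<dots> \<le> card J" using J(2)
    by (metis card_image_le finite_imageI le_trans)
  finally show ?thesis .
qed

end

lemma blk_blk_int:
  fixes \<alpha> e1 e2 :: "nat \<Rightarrow> nat \<Rightarrow> 'a::field"
  assumes ia: "inj_on \<alpha> L" and da: "findependent (\<alpha> ` L)"
    and J: "J1 \<subseteq> L" "J2 \<subseteq> L" "J1 \<inter> J2 = {}" and fI: "finite I1"
  shows "P.dim (P.span (blk \<alpha> J1 e1 I1) \<inter> P.span (blk \<alpha> J2 e2 I2)) \<le> fdim (fspan (e1 ` I1) \<inter> fspan (e2 ` I2))"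
proof -
  define U where "U = fspan (e1 ` I1) \<inter> fspan (e2 ` I2)"
  obtain B where B: "B \<subseteq> U" "findependent B" "U \<subseteq> fspan B" "card B = fdim U"
    using V.basis_exists by blast
  have finB: "finite B" using V.independent_span_bound[OF _ B(2), of "e1 ` I1"] fI B(1) U_def by blast
  have disj: "\<alpha> ` J1 \<inter> \<alpha> ` J2 = {}" using J ia unfolding inj_on_def by blast
  have "P.span (blk \<alpha> J1 e1 I1) \<inter> P.span (blk \<alpha> J2 e2 I2) \<subseteq> P.span ((\<lambda>v. (0, v)) ` B)"
  proof
    fix x assume x: "x \<in> P.span (blk \<alpha> J1 e1 I1) \<inter> P.span (blk \<alpha> J2 e2 I2)"
    have "fst x = 0"
      using V.span_Int_disjoint[OF da _ _ disj] J blk_fst_span[of x \<alpha> J1 e1 I1] blk_fst_span[of x \<alpha> J2 e2 I2] x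
      by (meson IntD1 IntD2 image_mono)
    moreover have "snd x \<in> fspan B"
      using blk_snd_span[of x \<alpha> J1 e1 I1] blk_snd_span[of x \<alpha> J2 e2 I2] x B(3) U_def by blast
    hence "(0, snd x) \<in> P.span ((\<lambda>v. (0, v)) ` B)"
      using PV.linear_span_image[OF lin_pair0, of B] by blast
    ultimately show "x \<in> P.span ((\<lambda>v. (0, v)) ` B)" by (metis prod.collapse)
  qed
  hence "P.dim (P.span (blk \<alpha> J1 e1 I1) \<inter> P.span (blk \<alpha> J2 e2 I2)) \<le> card ((\<lambda>v. (0::nat \<Rightarrow> 'a, v)) ` B)"
    using finB by (intro P.dim_le_card) auto
  also have "\<dots> \<le> card B" using card_image_le[OF finB] .
  finally show ?thesis using B(4) U_def by simp
qed


lemma kk_Rsetup: "kk_setup m n l R \<alpha> \<phi> \<Longrightarrow> Rsetup R m"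
  unfolding kk_setup_def Rsetup_def Rsetup_axioms_def by auto

lemma kk_facts:
  assumes kk: "kk_setup m (l + m) l R \<alpha> \<phi>"
  shows "\<alpha> ` {1..l} \<subseteq> Vsp m" "inj_on \<alpha> {1..l}" "findependent (\<alpha> ` {1..l})"
    "Vector_Spaces.linear pscale fscale \<phi>"
    "inj_on \<phi> {(a, b). a \<in> fspan (\<alpha> ` {1..l}) \<and> b \<in> Vsp m}"
    "\<phi> ` {(a, b). a \<in> fspan (\<alpha> ` {1..l}) \<and> b \<in> Vsp m} = Vsp (l + m)"
    "carrier R = Vsp m"
  using kk unfolding kk_setup_def bij_betw_def by auto

lemma KK_code_props:
  assumes kk: "kk_setup m (l + m) l R \<alpha> \<phi>"
  shows "\<forall>U\<in>KKcode R \<alpha> l k \<phi>. fsubspace U \<and> U \<subseteq> Vsp (l + m) \<and> fdim U = l"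
    "\<forall>U\<in>KKcode R \<alpha> l k \<phi>. \<forall>V\<in>KKcode R \<alpha> l k \<phi>. U \<noteq> V \<longrightarrow> fdim (U \<inter> V) \<le> k - 1"
proof -
  interpret Rsetup R m using kk_Rsetup[OF kk] .
  note F = kk_facts[OF kk]
  define Dm where "Dm = {(a, b). a \<in> fspan (\<alpha> ` {1..l}) \<and> b \<in> (Vsp m :: (nat \<Rightarrow> 'a) set)}"
  have G: "Esp R \<alpha> l k f \<subseteq> P.span ((\<lambda>i. (\<alpha> i, linpoly R k f (\<alpha> i))) ` {1..l})"
    "finite ((\<lambda>i. (\<alpha> i, linpoly R k f (\<alpha> i))) ` {1..l})"
    "P.subspace (Esp R \<alpha> l k f)" for f
    unfolding Esp_def by (auto intro: P.subspace_span)
  show "\<forall>U\<in>KKcode R \<alpha> l k \<phi>. fsubspace U \<and> U \<subseteq> Vsp (l + m) \<and> fdim U = l"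
  proof
    fix U assume "U \<in> KKcode R \<alpha> l k \<phi>"
    then obtain f where f: "\<forall>i<k. f i \<in> carrier R" and U: "U = \<phi> ` Esp R \<alpha> l k f"
      unfolding KKcode_def by blast
    have sub: "Esp R \<alpha> l k f \<subseteq> Dm" unfolding Dm_def using Esp_sub[OF f F(1)] .
    have "fdim U = P.dim (Esp R \<alpha> l k f)" "fsubspace U"
      unfolding U using transport[OF F(4) F(5)[folded Dm_def] sub G(3) G(1) G(2)] by auto
    moreover have "U \<subseteq> Vsp (l + m)" unfolding U using F(6)[folded Dm_def] sub by blast
    ultimately show "fsubspace U \<and> U \<subseteq> Vsp (l + m) \<and> fdim U = l" using Esp_dim[OF F(2) F(3)] by simp
  qed
  show "\<forall>U\<in>KKcode R \<alpha> l k \<phi>. \<forall>V\<in>KKcode R \<alpha> l k \<phi>. U \<noteq> V \<longrightarrow> fdim (U \<inter> V) \<le> k - 1"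
  proof (intro ballI impI)
    fix U V assume "U \<in> KKcode R \<alpha> l k \<phi>" "V \<in> KKcode R \<alpha> l k \<phi>" and ne: "U \<noteq> V"
    then obtain f g where f: "\<forall>i<k. f i \<in> carrier R" and U: "U = \<phi> ` Esp R \<alpha> l k f"
      and g: "\<forall>i<k. g i \<in> carrier R" and V: "V = \<phi> ` Esp R \<alpha> l k g"
      unfolding KKcode_def by blast
    have subf: "Esp R \<alpha> l k f \<subseteq> Dm" unfolding Dm_def using Esp_sub[OF f F(1)] .
    have subg: "Esp R \<alpha> l k g \<subseteq> Dm" unfolding Dm_def using Esp_sub[OF g F(1)] .
    have "fdim (U \<inter> V) = P.dim (Esp R \<alpha> l k f \<inter> Esp R \<alpha> l k g)"
      unfolding U V by (rule transport_int[OF F(4) F(5)[folded Dm_def] subf subg G(3) G(3) G(1) G(2)])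
    also have "\<dots> \<le> k - 1" using Esp_int[OF f g F(1)] ne U V by auto
    finally show "fdim (U \<inter> V) \<le> k - 1" .
  qed
qed


lemma interval_facts:
  fixes h l s :: nat
  assumes "s \<in> {1..t}" "h > 0 \<Longrightarrow> t \<le> l div h"
  shows "{(s - 1) * h + 1 .. s * h} \<subseteq> {1..l}" "card {(s - 1) * h + 1 .. s * h} = h"
proof -
  obtain s' where s: "s = Suc s'" using assms(1) by (cases s) auto
  show "card {(s - 1) * h + 1 .. s * h} = h" unfolding s by simp
  show "{(s - 1) * h + 1 .. s * h} \<subseteq> {1..l}"
  proof (cases "h = 0")
    case False
    hence "s \<le> l div h" using assms by auto
    hence "s * h \<le> l" using False by (simp add: less_eq_div_iff_mult_less_eq)
    thus ?thesis by auto
  qed simp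
qed

lemma interval_disj:
  fixes h s r :: nat
  assumes "s \<ge> 1" "r \<ge> 1" "s \<noteq> r"
  shows "{(s - 1) * h + 1 .. s * h} \<inter> {(r - 1) * h + 1 .. r * h} = {}"
proof (rule ccontr)
  assume "{(s - 1) * h + 1 .. s * h} \<inter> {(r - 1) * h + 1 .. r * h} \<noteq> {}"
  then obtain j where "j \<in> {(s - 1) * h + 1 .. s * h}" "j \<in> {(r - 1) * h + 1 .. r * h}" by blast
  hence j: "(s - 1) * h + 1 \<le> j" "j \<le> s * h" "(r - 1) * h + 1 \<le> j" "j \<le> r * h"
    by (simp_all only: atLeastAtMost_iff)
  obtain s' r' where sr: "s = Suc s'" "r = Suc r'" using assms by (cases s; cases r) auto
  show False
  proof (cases "s' < r'")
    case True
    hence "Suc s' * h \<le> r' * h" by (intro mult_le_mono1) simp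
    thus False using j sr by simp
  next
    case False
    hence "r' < s'" using assms sr by simp
    hence "Suc r' * h \<le> s' * h" by (intro mult_le_mono1) simp
    thus False using j sr by simp
  qed
qed


lemma Vblock_blk: "Vblock \<alpha> h l' e \<sigma> = blk \<alpha> {(\<sigma> - 1) * h + 1 .. \<sigma> * h} (e \<sigma>) {1..l'}"
  unfolding Vblock_def blk_def by simp

lemma recur_props:
  fixes D :: "(nat \<Rightarrow> 'a::{field,finite}) set set"
  assumes kk: "kk_setup m (l + m) l R \<alpha> \<phi>"
    and hk: "h < k" "k \<le> l"
    and IH1: "\<forall>U\<in>D. fsubspace U \<and> U \<subseteq> Vsp m \<and> fdim U = l - h"
    and IH2: "\<forall>U\<in>D. \<forall>V\<in>D. U \<noteq> V \<longrightarrow> fdim (U \<inter> V) \<le> k - 1"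
    and bij: "bij_betw Uf {1..card D} D"
    and t: "t = (if h > 0 then min (l div h) (card D) else card D)"
    and e: "\<forall>\<sigma>\<in>{1..t}. inj_on (e \<sigma>) {1..l - h} \<and> findependent (e \<sigma> ` {1..l - h})
                      \<and> fspan (e \<sigma> ` {1..l - h}) = Uf \<sigma>"
  defines "C \<equiv> KKcode R \<alpha> l k \<phi> \<union> {\<phi> ` pspan (Vblock \<alpha> h (l - h) e \<sigma>) | \<sigma>. \<sigma> \<in> {1..t}}"
  shows "(\<forall>U\<in>C. fsubspace U \<and> U \<subseteq> Vsp (l + m) \<and> fdim U = l)
       \<and> (\<forall>U\<in>C. \<forall>V\<in>C. U \<noteq> V \<longrightarrow> fdim (U \<inter> V) \<le> k - 1)"
proof -
  interpret Rsetup R m using kk_Rsetup[OF kk] .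
  note F = kk_facts[OF kk]
  define Dm where "Dm = {(a, b). a \<in> fspan (\<alpha> ` {1..l}) \<and> b \<in> (Vsp m :: (nat \<Rightarrow> 'a) set)}"
  note lin = F(4) and inj = F(5)[folded Dm_def] and img = F(6)[folded Dm_def]
  define I where "I = {1..l - h}"
  define J where "J = (\<lambda>\<sigma>::nat. {(\<sigma> - 1) * h + 1 .. \<sigma> * h})"
  define Xb where "Xb = (\<lambda>\<sigma>. P.span (blk \<alpha> (J \<sigma>) (e \<sigma>) I))"
  have BB: "{\<phi> ` pspan (Vblock \<alpha> h (l - h) e \<sigma>) | \<sigma>. \<sigma> \<in> {1..t}} = {\<phi> ` Xb \<sigma> | \<sigma>. \<sigma> \<in> {1..t}}"
    unfolding Xb_def J_def I_def Vblock_blk by simp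
  have tb: "h > 0 \<Longrightarrow> t \<le> l div h" "t \<le> card D" using t by auto
  have J1: "J \<sigma> \<subseteq> {1..l}" "card (J \<sigma>) = h" "finite (J \<sigma>)" if "\<sigma> \<in> {1..t}" for \<sigma>
    using interval_facts[OF that tb(1)] unfolding J_def by auto
  have Jd: "J \<sigma> \<inter> J \<tau> = {}" if "\<sigma> \<in> {1..t}" "\<tau> \<in> {1..t}" "\<sigma> \<noteq> \<tau>" for \<sigma> \<tau>
    unfolding J_def using interval_disj[of \<sigma> \<tau> h] that by auto
  have tD: "\<sigma> \<in> {1..card D}" if "\<sigma> \<in> {1..t}" for \<sigma> using that tb(2) by auto
  have UD: "Uf \<sigma> \<in> D" if "\<sigma> \<in> {1..t}" for \<sigma>
    using bij tD[OF that] unfolding bij_betw_def by blast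
  have Uinj: "Uf \<sigma> \<noteq> Uf \<tau>" if "\<sigma> \<in> {1..t}" "\<tau> \<in> {1..t}" "\<sigma> \<noteq> \<tau>" for \<sigma> \<tau>
    using bij tD[OF that(1)] tD[OF that(2)] that(3) unfolding bij_betw_def by (meson inj_on_contraD)
  have eV: "e \<sigma> ` I \<subseteq> Vsp m" if "\<sigma> \<in> {1..t}" for \<sigma>
  proof -
    have "e \<sigma> ` I \<subseteq> fspan (e \<sigma> ` I)" by (rule V.span_superset)
    also have "\<dots> = Uf \<sigma>" using e that unfolding I_def by blast
    also have "\<dots> \<subseteq> Vsp m" using IH1 UD[OF that] by blast
    finally show ?thesis .
  qed
  have aJ: "\<alpha> ` J \<sigma> \<subseteq> fspan (\<alpha> ` {1..l})" if "\<sigma> \<in> {1..t}" for \<sigma>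
    using J1(1)[OF that] V.span_superset by blast
  have XbD: "Xb \<sigma> \<subseteq> Dm" if "\<sigma> \<in> {1..t}" for \<sigma>
    unfolding Xb_def Dm_def by (rule blk_Dom[OF aJ[OF that] eV[OF that]])
  have Xbs: "P.subspace (Xb \<sigma>)" for \<sigma> unfolding Xb_def by (rule P.subspace_span)
  have Xbf: "finite (blk \<alpha> (J \<sigma>) (e \<sigma>) I)" "Xb \<sigma> \<subseteq> P.span (blk \<alpha> (J \<sigma>) (e \<sigma>) I)"
    if "\<sigma> \<in> {1..t}" for \<sigma>
    using blk_finite[OF J1(3)[OF that], of I] unfolding Xb_def I_def by auto
  have Xbdim: "P.dim (Xb \<sigma>) = l" if "\<sigma> \<in> {1..t}" for \<sigma>
  proof -
    have ind: "\<not> P.dependent (blk \<alpha> (J \<sigma>) (e \<sigma>) I)" "card (blk \<alpha> (J \<sigma>) (e \<sigma>) I) = card (J \<sigma>) + card I"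
      using blk_indep[OF J1(1)[OF that] J1(3)[OF that] _ F(2) F(3), of I "e \<sigma>"] e that unfolding I_def by auto
    show ?thesis unfolding Xb_def P.dim_span_eq_card_independent[OF ind(1)] ind(2) J1(2)[OF that]
      using hk unfolding I_def by simp
  qed
  have G: "Esp R \<alpha> l k f \<subseteq> P.span ((\<lambda>i. (\<alpha> i, linpoly R k f (\<alpha> i))) ` {1..l})"
    "finite ((\<lambda>i. (\<alpha> i, linpoly R k f (\<alpha> i))) ` {1..l})"
    "P.subspace (Esp R \<alpha> l k f)" for f
    unfolding Esp_def by (auto intro: P.subspace_span)
  have KKB: "fdim (\<phi> ` Esp R \<alpha> l k f \<inter> \<phi> ` Xb \<sigma>) \<le> k - 1"
    if f: "\<forall>i<k. f i \<in> carrier R" and s: "\<sigma> \<in> {1..t}" for f \<sigma>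
  proof -
    have subf: "Esp R \<alpha> l k f \<subseteq> Dm" unfolding Dm_def using Esp_sub[OF f F(1)] .
    have "fdim (\<phi> ` Esp R \<alpha> l k f \<inter> \<phi> ` Xb \<sigma>) = P.dim (Esp R \<alpha> l k f \<inter> Xb \<sigma>)"
      by (rule transport_int[OF lin inj subf XbD[OF s] G(3) Xbs G(1) G(2)])
    also have "\<dots> \<le> card (J \<sigma>)" unfolding Xb_def
      by (rule Esp_blk_int[OF f F(1) J1(1)[OF s] J1(3)[OF s]])
    also have "\<dots> \<le> k - 1" using J1(2)[OF s] hk by simp
    finally show ?thesis .
  qed
  have BBB: "fdim (\<phi> ` Xb \<sigma> \<inter> \<phi> ` Xb \<tau>) \<le> k - 1"
    if s: "\<sigma> \<in> {1..t}" and r: "\<tau> \<in> {1..t}" and ne: "\<sigma> \<noteq> \<tau>" for \<sigma> \<tau>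
  proof -
    have "fdim (\<phi> ` Xb \<sigma> \<inter> \<phi> ` Xb \<tau>) = P.dim (Xb \<sigma> \<inter> Xb \<tau>)"
      by (rule transport_int[OF lin inj XbD[OF s] XbD[OF r] Xbs Xbs Xbf(2)[OF s] Xbf(1)[OF s]])
    also have "\<dots> \<le> fdim (fspan (e \<sigma> ` I) \<inter> fspan (e \<tau> ` I))" unfolding Xb_def
      by (rule blk_blk_int[OF F(2) F(3) J1(1)[OF s] J1(1)[OF r] Jd[OF s r ne]]) (simp add: I_def)
    also have "fspan (e \<sigma> ` I) \<inter> fspan (e \<tau> ` I) = Uf \<sigma> \<inter> Uf \<tau>" using e s r unfolding I_def by auto
    also have "fdim (Uf \<sigma> \<inter> Uf \<tau>) \<le> k - 1" using IH2 UD[OF s] UD[OF r] Uinj[OF s r ne] by blast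
    finally show ?thesis .
  qed
  note KK = KK_code_props[OF kk, of k]
  show ?thesis
  proof
    show "\<forall>U\<in>C. fsubspace U \<and> U \<subseteq> Vsp (l + m) \<and> fdim U = l"
    proof
      fix U assume "U \<in> C"
      hence "U \<in> KKcode R \<alpha> l k \<phi> \<or> (\<exists>\<sigma>\<in>{1..t}. U = \<phi> ` Xb \<sigma>)" unfolding C_def BB by blast
      thus "fsubspace U \<and> U \<subseteq> Vsp (l + m) \<and> fdim U = l"
      proof
        assume "U \<in> KKcode R \<alpha> l k \<phi>" thus ?thesis using KK(1) by blast
      next
        assume "\<exists>\<sigma>\<in>{1..t}. U = \<phi> ` Xb \<sigma>"
        then obtain \<sigma> where s: "\<sigma> \<in> {1..t}" and U: "U = \<phi> ` Xb \<sigma>" by blast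
        have "fdim U = P.dim (Xb \<sigma>)" "fsubspace U"
          unfolding U using transport[OF lin inj XbD[OF s] Xbs Xbf(2)[OF s] Xbf(1)[OF s]] by auto
        moreover have "U \<subseteq> Vsp (l + m)" unfolding U using img XbD[OF s] by blast
        ultimately show ?thesis using Xbdim[OF s] by simp
      qed
    qed
    show "\<forall>U\<in>C. \<forall>V\<in>C. U \<noteq> V \<longrightarrow> fdim (U \<inter> V) \<le> k - 1"
    proof (intro ballI impI)
      fix U V assume U: "U \<in> C" and V: "V \<in> C" and ne: "U \<noteq> V"
      have cases: "W \<in> KKcode R \<alpha> l k \<phi> \<or> (\<exists>\<sigma>\<in>{1..t}. W = \<phi> ` Xb \<sigma>)" if "W \<in> C" for W
        using that unfolding C_def BB by blast
      have KKE: "\<exists>f. (\<forall>i<k. f i \<in> carrier R) \<and> W = \<phi> ` Esp R \<alpha> l k f" if "W \<in> KKcode R \<alpha> l k \<phi>" for W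
        using that unfolding KKcode_def by blast
      show "fdim (U \<inter> V) \<le> k - 1"
        using cases[OF U]
      proof
        assume U1: "U \<in> KKcode R \<alpha> l k \<phi>"
        show ?thesis using cases[OF V]
        proof
          assume "V \<in> KKcode R \<alpha> l k \<phi>" thus ?thesis using KK(2) U1 ne by blast
        next
          assume "\<exists>\<sigma>\<in>{1..t}. V = \<phi> ` Xb \<sigma>"
          then obtain \<sigma> where s: "\<sigma> \<in> {1..t}" and V2: "V = \<phi> ` Xb \<sigma>" by blast
          obtain f where f: "\<forall>i<k. f i \<in> carrier R" "U = \<phi> ` Esp R \<alpha> l k f" using KKE[OF U1] by blast
          show ?thesis using KKB[OF f(1) s] f(2) V2 by simp
        qed
      next
        assume "\<exists>\<sigma>\<in>{1..t}. U = \<phi> ` Xb \<sigma>"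
        then obtain \<sigma> where s: "\<sigma> \<in> {1..t}" and U2: "U = \<phi> ` Xb \<sigma>" by blast
        show ?thesis using cases[OF V]
        proof
          assume V1: "V \<in> KKcode R \<alpha> l k \<phi>"
          obtain f where f: "\<forall>i<k. f i \<in> carrier R" "V = \<phi> ` Esp R \<alpha> l k f" using KKE[OF V1] by blast
          show ?thesis using KKB[OF f(1) s] f(2) U2 by (simp add: Int_commute)
        next
          assume "\<exists>\<tau>\<in>{1..t}. V = \<phi> ` Xb \<tau>"
          then obtain \<tau> where r: "\<tau> \<in> {1..t}" and V2: "V = \<phi> ` Xb \<tau>" by blast
          have "\<sigma> \<noteq> \<tau>" using ne U2 V2 by auto
          thus ?thesis using BBB[OF s r] U2 V2 by simp
        qed
      qed
    qed
  qed
qed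


lemma Ccode_props:
  "Ccode n l k C \<Longrightarrow> (\<forall>U\<in>C. fsubspace U \<and> U \<subseteq> Vsp n \<and> fdim U = l)
       \<and> (\<forall>U\<in>C. \<forall>V\<in>C. U \<noteq> V \<longrightarrow> fdim (U \<inter> V) \<le> k - 1)"
proof (induction rule: Ccode.induct)
  case (base k l m h R \<alpha> \<phi>)
  show ?case using KK_code_props[OF base(6), of k] by blast
next
  case (recur k l m h R \<alpha> \<phi> D U t e)
  show ?case by (rule recur_props[OF recur(6) recur(4) recur(2) _ _ recur(8) recur(9) recur(10)])
    (use recur(11) in blast)+
qed

theorem mainTheorem2:
  fixes C :: "(nat \<Rightarrow> 'a::{field,finite}) set set"
    and l m k :: nat
  assumes "1 \<le> k" and "k \<le> l" and "l \<le> m"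
    and "Ccode (l + m) l k C"
  shows "(\<forall>U\<in>C. fsubspace U \<and> U \<subseteq> Vsp (l + m) \<and> fdim U = l)
       \<and> (\<forall>U\<in>C. \<forall>V\<in>C. U \<noteq> V \<longrightarrow> fdim (U \<inter> V) \<le> k - 1)
       \<and> (\<forall>U\<in>C. \<forall>V\<in>C. U \<noteq> V \<longrightarrow> subdist U V \<ge> 2 * (int l - int k + 1))"
proof -
  note P = Ccode_props[OF assms(4)]
  have "subdist U V \<ge> 2 * (int l - int k + 1)" if "U \<in> C" "V \<in> C" "U \<noteq> V" for U V
  proof -
    have a: "fdim U = l" "fdim V = l" "fdim (U \<inter> V) \<le> k - 1" using P that by auto
    have "fdim (U \<inter> V) + 1 \<le> k" using a(3) assms(1) by linarith
    hence "int (fdim (U \<inter> V)) + 1 \<le> int k" by linarith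
    thus ?thesis unfolding subdist_def a(1) a(2) by (simp add: algebra_simps)
  qed
  thus ?thesis using P by blast
qed


end
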